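(* Let $N$ be a one-dimensional homogeneous $S^{1}$-space, $k\geq2$, $\omega$ an $S^{1}$-invariant volume form on $N\times\mathbb{R}^{k}$ (with $S^{1}$ acting via the first factor), $X$ the vector field on $N\times\mathbb{R}^{k}$ generating the $S^{1}$-action, and $h$ a non-constant smooth function on $N\times\mathbb{R}^{k}$ with $X(h)=0$. Then there exists a compactly supported smooth vector field $Y$ on $N\times\mathbb{R}^{k}$ with $\operatorname{div}_{\omega}(Y)=0$ and $[X,Y]=0$ such that $Y(h)$ is not identically zero.
   Context: A one-dimensional homogeneous $S^{1}$-space is a quotient $S^{1}/H$ by a closed subgroup $H$ with $\dim S^{1}/H=1$. For a volume form $\omega$ the divergence is defined by $\operatorname{div}_{\omega}(Y)\,\omega=L_{Y}\omega=d(i_{Y}\omega)$. *)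

theory Defs
  imports "HOL-Analysis.Analysis"
begin

fun Cn :: "nat \<Rightarrow> ('a::euclidean_space \<Rightarrow> real) \<Rightarrow> bool" where
  "Cn 0 f = continuous_on UNIV f"
| "Cn (Suc n) f = (f differentiable_on UNIV \<and>
      (\<forall>i\<in>Basis. Cn n (\<lambda>x. frechet_derivative f (at x) i)))"

definition smooth_fun :: "('a::euclidean_space \<Rightarrow> real) \<Rightarrow> bool" where
  "smooth_fun f \<longleftrightarrow> (\<forall>n. Cn n f)"

definition smooth_vf :: "('a::euclidean_space \<Rightarrow> 'a) \<Rightarrow> bool" where
  "smooth_vf Y \<longleftrightarrow> (\<forall>i\<in>Basis. smooth_fun (\<lambda>p. Y p \<bullet> i))"

definition vf_apply :: "('a::euclidean_space \<Rightarrow> 'a) \<Rightarrow> ('a \<Rightarrow> real) \<Rightarrow> 'a \<Rightarrow> real" where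
  "vf_apply Y h p = frechet_derivative h (at p) (Y p)"

definition lie_bracket :: "('a::euclidean_space \<Rightarrow> 'a) \<Rightarrow> ('a \<Rightarrow> 'a) \<Rightarrow> 'a \<Rightarrow> 'a" where
  "lie_bracket X Y p = frechet_derivative Y (at p) (X p) - frechet_derivative X (at p) (Y p)"

text \<open>Divergence of Y with respect to the volume form rho dx_1 ... dx_n
  (rho nowhere zero): div Y = (1/rho) sum_i d_i (rho Y_i).\<close>
definition div_vol :: "('a::euclidean_space \<Rightarrow> real) \<Rightarrow> ('a \<Rightarrow> 'a) \<Rightarrow> 'a \<Rightarrow> real" where
  "div_vol \<rho> Y p = (\<Sum>i\<in>Basis. frechet_derivative (\<lambda>q. \<rho> q * (Y q \<bullet> i)) (at p) i) / \<rho> p"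

text \<open>Coordinates on N x R^k, N = S^1/Z_m = R/(2 pi/m)Z: points (theta, x) with
  theta real, x in R^k; objects on N x R^k are lifts periodic in theta.\<close>
definition theta_periodic :: "real \<Rightarrow> (real \<times> 'b \<Rightarrow> 'c) \<Rightarrow> bool" where
  "theta_periodic T f \<longleftrightarrow> (\<forall>\<theta> x. f (\<theta> + T, x) = f (\<theta>, x))"

definition gen_X :: "real \<times> (real^'k) \<Rightarrow> real \<times> (real^'k)" where
  "gen_X p = (1, 0)"

text \<open>Compact support on N x R^k (N compact): vanishing outside N x B, B bounded.\<close>
definition compact_supp_N :: "(real \<times> (real^'k) \<Rightarrow> real \<times> (real^'k)) \<Rightarrow> bool" where
  "compact_supp_N Y \<longleftrightarrow> (\<exists>B. bounded B \<and> (\<forall>\<theta> x. x \<notin> B \<longrightarrow> Y (\<theta>, x) = 0))"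

end

theory Submission
  imports Defs "HOL-Computational_Algebra.Polynomial"
begin


lemma Cn_SucD: "Cn (Suc n) f \<Longrightarrow> (f has_derivative frechet_derivative f (at x)) (at x)"
  by (auto simp: differentiable_on_def frechet_derivative_works[symmetric])

lemma Cn_SucD2: "Cn (Suc n) f \<Longrightarrow> i \<in> Basis \<Longrightarrow> Cn n (\<lambda>x. frechet_derivative f (at x) i)"
  by auto

lemma Cn_SucI:
  assumes "\<And>x. (f has_derivative f' x) (at x)" "\<And>i. i\<in>Basis \<Longrightarrow> Cn n (\<lambda>x. f' x i)"
  shows "Cn (Suc n) f"
proof -
  have e: "frechet_derivative f (at x) = f' x" for x using frechet_derivative_at[OF assms(1)] by simp
  have "f differentiable_on UNIV" using assms(1) unfolding differentiable_on_def differentiable_def by blast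
  then show ?thesis using assms(2) by (simp add: e)
qed

lemma Cn_cont: "Cn n f \<Longrightarrow> continuous_on UNIV f"
  by (cases n) (auto intro: differentiable_imp_continuous_on)

lemma Cn_mono: "Cn (Suc n) f \<Longrightarrow> Cn n f"
proof (induction n arbitrary: f)
  case 0 then show ?case by (auto intro: differentiable_imp_continuous_on)
next
  case (Suc n)
  then show ?case by (metis Cn.simps(2))
qed

lemma Cn_const: "Cn n (\<lambda>x. c)"
proof (induction n arbitrary: c)
  case 0 then show ?case by simp
next
  case (Suc n) then show ?case by (intro Cn_SucI[where f'="\<lambda>x h. 0"]) auto
qed

lemma Cn_inner: "Cn n (\<lambda>x. x \<bullet> v)"
proof (cases n)
  case 0 then show ?thesis by (simp add: continuous_on_inner)
next
  case (Suc m) show ?thesis unfolding Suc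
    by (rule Cn_SucI[where f'="\<lambda>x h. h \<bullet> v"]) (auto intro!: derivative_eq_intros Cn_const)
qed

lemma Cn_add: "Cn n f \<Longrightarrow> Cn n g \<Longrightarrow> Cn n (\<lambda>x. f x + g x)"
proof (induction n arbitrary: f g)
  case 0 then show ?case by (auto intro: continuous_on_add)
next
  case (Suc n)
  show ?case
  proof (rule Cn_SucI[where f'="\<lambda>x h. frechet_derivative f (at x) h + frechet_derivative g (at x) h"])
    show "((\<lambda>x. f x + g x) has_derivative (\<lambda>h. frechet_derivative f (at x) h + frechet_derivative g (at x) h)) (at x)" for x
      by (rule has_derivative_add[OF Cn_SucD[OF Suc.prems(1)] Cn_SucD[OF Suc.prems(2)]])
    show "Cn n (\<lambda>x. frechet_derivative f (at x) i + frechet_derivative g (at x) i)" if "i\<in>Basis" for i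
      by (rule Suc.IH[OF Cn_SucD2[OF Suc.prems(1) that] Cn_SucD2[OF Suc.prems(2) that]])
  qed
qed

lemma Cn_mult: "Cn n f \<Longrightarrow> Cn n g \<Longrightarrow> Cn n (\<lambda>x. f x * g x)"
proof (induction n arbitrary: f g)
  case 0 then show ?case by (auto intro: continuous_on_mult)
next
  case (Suc n)
  show ?case
  proof (rule Cn_SucI[where f'="\<lambda>x h. f x * frechet_derivative g (at x) h + frechet_derivative f (at x) h * g x"])
    show "((\<lambda>x. f x * g x) has_derivative (\<lambda>h. f x * frechet_derivative g (at x) h + frechet_derivative f (at x) h * g x)) (at x)" for x
      by (rule has_derivative_mult[OF Cn_SucD[OF Suc.prems(1)] Cn_SucD[OF Suc.prems(2)]])
    show "Cn n (\<lambda>x. f x * frechet_derivative g (at x) i + frechet_derivative f (at x) i * g x)" if "i\<in>Basis" for i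
      by (rule Cn_add[OF Suc.IH[OF Cn_mono[OF Suc.prems(1)] Cn_SucD2[OF Suc.prems(2) that]]
                         Suc.IH[OF Cn_SucD2[OF Suc.prems(1) that] Cn_mono[OF Suc.prems(2)]]])
  qed
qed

lemma Cn_cmult: "Cn n f \<Longrightarrow> Cn n (\<lambda>x. c * f x)"
  using Cn_mult[OF Cn_const] .

lemma Cn_diff: "Cn n f \<Longrightarrow> Cn n g \<Longrightarrow> Cn n (\<lambda>x. f x - g x)"
  using Cn_add[of n f "\<lambda>x. (-1) * g x"] Cn_cmult[of n g "-1"] by simp

lemma Cn_uminus: "Cn n f \<Longrightarrow> Cn n (\<lambda>x. - f x)"
  using Cn_cmult[of n f "-1"] by simp

lemma Cn_inverse: "Cn n f \<Longrightarrow> (\<And>x. f x \<noteq> 0) \<Longrightarrow> Cn n (\<lambda>x. inverse (f x))"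
proof (induction n arbitrary: f)
  case 0 then show ?case by (auto intro!: continuous_on_inverse)
next
  case (Suc n)
  have I: "Cn n (\<lambda>x. inverse (f x))" using Suc.IH[OF Cn_mono[OF Suc.prems(1)]] Suc.prems(2) by blast
  show ?case
  proof (rule Cn_SucI[where f'="\<lambda>x h. - (inverse (f x) * frechet_derivative f (at x) h * inverse (f x))"])
    show "((\<lambda>x. inverse (f x)) has_derivative (\<lambda>h. - (inverse (f x) * frechet_derivative f (at x) h * inverse (f x)))) (at x)" for x
      by (rule Deriv.has_derivative_inverse[OF Suc.prems(2) Cn_SucD[OF Suc.prems(1)]])
    show "Cn n (\<lambda>x. - (inverse (f x) * frechet_derivative f (at x) i * inverse (f x)))" if "i\<in>Basis" for i
      by (rule Cn_uminus[OF Cn_mult[OF Cn_mult[OF I Cn_SucD2[OF Suc.prems(1) that]] I]])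
  qed
qed

lemma real_lin: "linear L \<Longrightarrow> L (h::real) = h * L 1"
  by (metis linear_cmul mult.right_neutral real_scaleR_def)

lemma Cn_deriv1: "Cn (Suc n) (g::real\<Rightarrow>real) \<Longrightarrow> Cn n (\<lambda>t. frechet_derivative g (at t) 1)"
  by (auto simp: Basis_real_def)

lemma Cn_compose:
  fixes g :: "real \<Rightarrow> real"
  shows "Cn n g \<Longrightarrow> Cn n f \<Longrightarrow> Cn n (\<lambda>x. g (f x))"
proof (induction n arbitrary: f g)
  case 0 then show ?case by (auto intro: continuous_on_compose2)
next
  case (Suc n)
  have L: "linear (frechet_derivative g (at y))" for y
    using Cn_SucD[OF Suc.prems(1)] has_derivative_linear by blast
  have I: "Cn n (\<lambda>x. frechet_derivative g (at (f x)) 1)"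
    using Suc.IH[of "\<lambda>y. frechet_derivative g (at y) 1" f] Cn_mono[OF Suc.prems(2)] Cn_deriv1[OF Suc.prems(1)] by blast
  show ?case
  proof (rule Cn_SucI[where f'="\<lambda>x h. frechet_derivative g (at (f x)) (frechet_derivative f (at x) h)"])
    show "((\<lambda>x. g (f x)) has_derivative (\<lambda>h. frechet_derivative g (at (f x)) (frechet_derivative f (at x) h))) (at x)" for x
      by (rule has_derivative_compose[OF Cn_SucD[OF Suc.prems(2)] Cn_SucD[OF Suc.prems(1)]])
    show "Cn n (\<lambda>x. frechet_derivative g (at (f x)) (frechet_derivative f (at x) i))" if "i\<in>Basis" for i
    proof -
      have eq: "(\<lambda>x. frechet_derivative g (at (f x)) (frechet_derivative f (at x) i))
          = (\<lambda>x. frechet_derivative f (at x) i * frechet_derivative g (at (f x)) 1)"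
        by (rule ext, rule real_lin[OF L])
      show ?thesis unfolding eq by (rule Cn_mult[OF Cn_SucD2[OF Suc.prems(2) that] I])
    qed
  qed
qed

lemma Cn_sum: "finite S \<Longrightarrow> (\<And>s. s\<in>S \<Longrightarrow> Cn n (f s)) \<Longrightarrow> Cn n (\<lambda>x. \<Sum>s\<in>S. f s x)"
  by (induction S rule: finite_induct) (auto intro: Cn_add Cn_const)

lemma Cn_prod: "finite S \<Longrightarrow> (\<And>s. s\<in>S \<Longrightarrow> Cn n (f s)) \<Longrightarrow> Cn n (\<lambda>x. \<Prod>s\<in>S. f s x)"
  by (induction S rule: finite_induct) (auto intro: Cn_mult Cn_const)

lemma deriv1: "Cn (Suc n) (g::real\<Rightarrow>real) \<Longrightarrow> (g has_real_derivative frechet_derivative g (at t) 1) (at t)"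
proof -
  assume a: "Cn (Suc n) g"
  define c where "c = frechet_derivative g (at t) 1"
  have d: "(g has_derivative frechet_derivative g (at t)) (at t)" using Cn_SucD[OF a] .
  have e: "frechet_derivative g (at t) = (\<lambda>h. h * c)"
    unfolding c_def by (rule ext, rule real_lin[OF has_derivative_linear[OF d]])
  have "(g has_derivative (\<lambda>h. h * c)) (at t)" using d unfolding e .
  then show ?thesis unfolding has_field_derivative_def c_def[symmetric]
    by (rule has_derivative_eq_rhs) (auto simp: mult.commute)
qed



definition GP :: "real poly \<Rightarrow> real \<Rightarrow> real" where
  "GP P s = (if s > 0 then poly P (1/s) * exp (-(1/s)) else 0)"

lemma lim_poly_exp: "((\<lambda>u. poly P u * exp (-u)) \<longlongrightarrow> (0::real)) at_top"
proof -
  have eq: "(\<lambda>u. poly P u * exp (-u)) = (\<lambda>u. \<Sum>i\<le>degree P. coeff P i * (u ^ i / exp u))"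
    by (rule ext) (simp add: poly_altdef sum_distrib_right exp_minus divide_inverse mult.assoc)
  have "((\<lambda>u. \<Sum>i\<le>degree P. coeff P i * (u ^ i / exp u)) \<longlongrightarrow> (\<Sum>i\<le>degree P. coeff P i * 0)) at_top"
    by (intro tendsto_sum tendsto_mult tendsto_const tendsto_power_div_exp_0)
  then show ?thesis unfolding eq by simp
qed

lemma GP_right: "((GP P) \<longlongrightarrow> 0) (at_right 0)"
proof -
  have "((\<lambda>s. poly P (inverse s) * exp (- inverse s)) \<longlongrightarrow> 0) (at_right (0::real))"
    using filterlim_compose[OF lim_poly_exp filterlim_inverse_at_top_right] by simp
  then show ?thesis
    by (rule Lim_transform_eventually)
       (auto simp: GP_def eventually_at_right_field divide_inverse intro!: exI[of _ 1])
qed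

lemma GP_left: "((GP P) \<longlongrightarrow> 0) (at_left 0)"
proof -
  have "eventually (\<lambda>s. 0 = GP P s) (at_left (0::real))"
    by (auto simp: GP_def eventually_at_left_field intro!: exI[of _ "-1"])
  then show ?thesis by (rule Lim_transform_eventually[OF tendsto_const])
qed

lemma GP_at0: "((GP P) \<longlongrightarrow> 0) (at 0)"
  using GP_left GP_right by (rule filterlim_split_at)

definition DQ :: "real poly \<Rightarrow> real poly" where
  "DQ P = [:0,0,1:] * (P - pderiv P)"

lemma GP_deriv: "(GP P has_real_derivative GP (DQ P) s) (at s)"
proof -
  consider "s > 0" | "s < 0" | "s = 0" by linarith
  then show ?thesis
  proof cases
    case 1
    have "((\<lambda>s. poly P (1/s) * exp (-(1/s))) has_real_derivative
           poly (pderiv P) (1/s) * (- 1/s^2) * exp (-(1/s)) + poly P (1/s) * (exp (-(1/s)) * (1/s^2))) (at s)"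
      using 1 by (auto intro!: derivative_eq_intros DERIV_chain2[OF poly_DERIV] simp: power2_eq_square field_simps)
    then have "(GP P has_real_derivative
           poly (pderiv P) (1/s) * (- 1/s^2) * exp (-(1/s)) + poly P (1/s) * (exp (-(1/s)) * (1/s^2))) (at s)"
      by (rule has_field_derivative_transform_within_open[where S="{0<..}"]) (use 1 in \<open>auto simp: GP_def\<close>)
    moreover have "poly (pderiv P) (1/s) * (- 1/s^2) * exp (-(1/s)) + poly P (1/s) * (exp (-(1/s)) * (1/s^2))
        = GP (DQ P) s"
      using 1 by (simp add: GP_def DQ_def algebra_simps power2_eq_square)
    ultimately show ?thesis by simp
  next
    case 2
    have "((\<lambda>s. 0) has_real_derivative 0) (at s)" by simp
    then have "(GP P has_real_derivative 0) (at s)"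
      by (rule has_field_derivative_transform_within_open[where S="{..<0}"]) (use 2 in \<open>auto simp: GP_def\<close>)
    then show ?thesis using 2 by (simp add: GP_def)
  next
    case 3
    have eq: "(\<lambda>y. (GP P y - GP P 0) / (y - 0)) = GP (pCons 0 P)"
      by (rule ext) (simp add: GP_def field_simps)
    show ?thesis unfolding has_field_derivative_iff 3 eq
      using GP_at0[of "pCons 0 P"] by (simp add: GP_def)
  qed
qed

lemma GP_smooth: "Cn n (GP P)"
proof (induction n arbitrary: P)
  case 0
  have "\<forall>x. isCont (GP P) x" using GP_deriv DERIV_isCont by blast
  then show ?case by (simp add: continuous_on_eq_continuous_at)
next
  case (Suc n)
  show ?case
  proof (rule Cn_SucI[where f'="\<lambda>x h. h * GP (DQ P) x"])
    show "(GP P has_derivative (\<lambda>h. h * GP (DQ P) x)) (at x)" for x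
      using GP_deriv[of P x] unfolding has_field_derivative_def
      by (rule has_derivative_eq_rhs) (auto simp: mult.commute)
    show "Cn n (\<lambda>x. i * GP (DQ P) x)" if "i \<in> Basis" for i
      using that Suc.IH[of "DQ P"] by (simp add: Basis_real_def)
  qed
qed



lemma dir_zero:
  assumes "(f has_derivative f') (at p)" "\<And>t::real. f (p + t *\<^sub>R v) = f p"
  shows "f' v = 0"
proof -
  have "((\<lambda>t::real. p + t *\<^sub>R v) has_derivative (\<lambda>s. s *\<^sub>R v)) (at 0)"
    by (auto intro!: derivative_eq_intros)
  from has_derivative_compose[OF this, of f f'] assms(1)
  have "((\<lambda>t. f (p + t *\<^sub>R v)) has_derivative (\<lambda>s. f' (s *\<^sub>R v))) (at 0)" by simp
  then have d1: "((\<lambda>t. f p) has_derivative (\<lambda>s. f' (s *\<^sub>R v))) (at (0::real))" using assms(2) by simp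
  have d2: "((\<lambda>t. f p) has_derivative (\<lambda>s. 0)) (at (0::real))" by simp
  have "(\<lambda>s. f' (s *\<^sub>R v)) = (\<lambda>s. 0)" using has_derivative_unique[OF d1 d2] .
  then show ?thesis by (metis scaleR_one)
qed

lemma zero_near:
  assumes "(f has_derivative f') (at x)" "open S" "x \<in> S" "\<And>y. y \<in> S \<Longrightarrow> f y = 0"
  shows "f' = (\<lambda>h. 0)"
proof -
  have "((\<lambda>y. 0) has_derivative (\<lambda>h. 0)) (at x)" by simp
  then have "(f has_derivative (\<lambda>h. 0)) (at x)"
    by (rule has_derivative_transform_within_open[OF _ assms(2,3)]) (use assms(4) in auto)
  then show ?thesis using has_derivative_unique[OF assms(1)] by blast
qed

lemma lin_basis_sum:
  fixes L :: "'a::euclidean_space \<Rightarrow> real"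
  assumes "linear L"
  shows "(\<Sum>b\<in>Basis. L b * (v \<bullet> b)) = L v"
proof -
  have "L v = L (\<Sum>b\<in>Basis. (v \<bullet> b) *\<^sub>R b)" by (simp add: euclidean_representation)
  also have "\<dots> = (\<Sum>b\<in>Basis. (v \<bullet> b) * L b)"
    using assms by (simp add: linear_sum linear_scale)
  finally show ?thesis by (simp add: mult.commute)
qed

lemma comp_inner_deriv:
  assumes "Cn (Suc n) s"
  shows "((\<lambda>p. s (p \<bullet> v)) has_derivative (\<lambda>h. (h \<bullet> v) * frechet_derivative s (at (p \<bullet> v)) 1)) (at p)"
proof -
  have "(s has_derivative (\<lambda>h. h * frechet_derivative s (at (p \<bullet> v)) 1)) (at (p \<bullet> v))"
    using deriv1[OF assms, of "p \<bullet> v"] unfolding has_field_derivative_def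
    by (rule has_derivative_eq_rhs) (auto simp: mult.commute)
  moreover have "((\<lambda>p. p \<bullet> v) has_derivative (\<lambda>h. h \<bullet> v)) (at p)"
    by (auto intro!: derivative_eq_intros)
  ultimately show ?thesis using has_derivative_compose[of "\<lambda>p. p \<bullet> v" "\<lambda>h. h \<bullet> v" p UNIV s] by simp
qed

definition bump :: "real \<Rightarrow> real" where "bump t = GP 1 (1 - t * t)"
definition bc :: "real \<Rightarrow> real \<Rightarrow> real" where "bc z t = bump (t - z)"
definition cc :: "real \<Rightarrow> real \<Rightarrow> real" where "cc z t = (t - z) * bump (t - z)"
definition d1 :: "(real \<Rightarrow> real) \<Rightarrow> real \<Rightarrow> real" where "d1 s t = frechet_derivative s (at t) 1"

lemma Cn_id: "Cn n (\<lambda>t::real. t)"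
  using Cn_inner[of n "1::real"] by simp

lemma bump_smooth: "Cn n bump"
  unfolding bump_def
  by (rule Cn_compose[OF GP_smooth Cn_diff[OF Cn_const Cn_mult[OF Cn_id Cn_id]]])

lemma bc_smooth: "Cn n (bc z)"
  unfolding bc_def by (rule Cn_compose[OF bump_smooth Cn_diff[OF Cn_id Cn_const]])

lemma cc_smooth: "Cn n (cc z)"
  unfolding cc_def by (rule Cn_mult[OF Cn_diff[OF Cn_id Cn_const] Cn_compose[OF bump_smooth Cn_diff[OF Cn_id Cn_const]]])

lemma d1_smooth: "(\<And>n. Cn n s) \<Longrightarrow> Cn n (d1 s)"
  unfolding d1_def using Cn_deriv1 by blast

lemma bump0: "bump 0 = exp (-1)"
  by (simp add: bump_def GP_def)

lemma bump_out: "\<bar>t\<bar> > 1 \<Longrightarrow> bump t = 0"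
proof -
  assume "\<bar>t\<bar> > 1"
  then have "1 < t * t" by (metis abs_mult_self_eq abs_ge_self less_le_trans mult_less_cancel_right2 not_le less_trans zero_less_one abs_mult_less mult.commute)
  then show ?thesis by (simp add: bump_def GP_def)
qed

lemma out_open: "open {t::real. \<bar>t - z\<bar> > 1}"
  by (rule open_Collect_less) (auto intro!: continuous_intros)

lemma bc_out: "\<bar>t - z\<bar> > 1 \<Longrightarrow> bc z t = 0"
  by (simp add: bc_def bump_out)
lemma cc_out: "\<bar>t - z\<bar> > 1 \<Longrightarrow> cc z t = 0"
  by (simp add: cc_def bump_out)

lemma d1_out:
  assumes "\<And>n. Cn n s" "\<And>t. \<bar>t - z\<bar> > 1 \<Longrightarrow> s t = 0" "\<bar>t - z\<bar> > 1"
  shows "d1 s t = 0"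
proof -
  have "frechet_derivative s (at t) = (\<lambda>h. 0)"
    by (rule zero_near[OF Cn_SucD[OF assms(1)] out_open]) (use assms in auto)
  then show ?thesis by (simp add: d1_def)
qed

lemma bc_d1_center: "d1 (bc z) z = 0"
proof -
  have a: "(bc z has_real_derivative d1 (bc z) z) (at z)" unfolding d1_def by (rule deriv1[OF bc_smooth])
  have g: "(GP 1 has_real_derivative GP (DQ 1) (1 - (z - z) * (z - z))) (at (1 - (z - z) * (z - z)))"
    by (rule GP_deriv)
  have "((\<lambda>t. GP 1 (1 - (t - z) * (t - z))) has_real_derivative GP (DQ 1) (1 - (z - z) * (z - z)) * (0 - ((1 - 0) * (z - z) + (z - z) * (1 - 0)))) (at z)"
    by (rule DERIV_chain2[where f="GP 1" and g="\<lambda>t. 1 - (t - z) * (t - z)", OF g]) (auto intro!: derivative_eq_intros)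
  moreover have e: "bc z = (\<lambda>t. GP 1 (1 - (t - z) * (t - z)))" by (rule ext) (simp add: bc_def bump_def)
  ultimately have "(bc z has_real_derivative 0) (at z)" by simp
  then show ?thesis using DERIV_unique a by blast
qed

lemma cc_d1_center: "d1 (cc z) z = bump 0"
proof -
  have a: "(cc z has_real_derivative d1 (cc z) z) (at z)" unfolding d1_def by (rule deriv1[OF cc_smooth])
  have b: "(bc z has_real_derivative d1 (bc z) z) (at z)" unfolding d1_def by (rule deriv1[OF bc_smooth])
  have "((\<lambda>t. (t - z) * bc z t) has_real_derivative (z - z) * d1 (bc z) z + (1 - 0) * bc z z) (at z)"
    by (rule DERIV_mult'[OF _ b]) (auto intro!: derivative_eq_intros)
  moreover have e: "cc z = (\<lambda>t. (t - z) * bc z t)" by (rule ext) (simp add: bc_def cc_def)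
  ultimately have "(cc z has_real_derivative bump 0) (at z)" by (simp add: bc_def)
  then show ?thesis using DERIV_unique a by blast
qed



lemma exists_partial:
  fixes h :: "'a::euclidean_space \<Rightarrow> real"
  assumes "smooth_fun h" "\<exists>p q. h p \<noteq> h q"
  shows "\<exists>p b. b \<in> Basis \<and> frechet_derivative h (at p) b \<noteq> 0"
proof (rule ccontr)
  assume c: "\<not> ?thesis"
  have hd: "(h has_derivative frechet_derivative h (at p)) (at p)" for p
    using assms(1) unfolding smooth_fun_def by (metis Cn_SucD)
  have z: "frechet_derivative h (at p) = (\<lambda>v. 0)" for p
  proof
    fix v
    have "frechet_derivative h (at p) v = (\<Sum>b\<in>Basis. frechet_derivative h (at p) b * (v \<bullet> b))"
      using lin_basis_sum[OF has_derivative_linear[OF hd]] by simp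
    also have "\<dots> = 0" using c by simp
    finally show "frechet_derivative h (at p) v = 0" .
  qed
  have "\<exists>c. \<forall>x\<in>UNIV. h x = c"
    by (rule has_derivative_zero_constant[of UNIV]) (use hd z in auto)
  then show False using assms(2) by auto
qed

lemma Y_construct:
  fixes \<rho> :: "real \<times> (real^'k) \<Rightarrow> real" and h :: "real \<times> (real^'k) \<Rightarrow> real"
    and u w x0 :: "real^'k"
  assumes sr: "smooth_fun \<rho>" and nz: "\<forall>p. \<rho> p \<noteq> 0"
    and inv: "\<forall>t \<theta> x. \<rho> (\<theta> + t, x) = \<rho> (\<theta>, x)"
    and sh: "smooth_fun h"
    and uB: "u \<in> Basis" and wB: "w \<in> Basis" and uw: "u \<noteq> w"
    and hu: "frechet_derivative h (at (\<theta>0, x0)) (0, u) \<noteq> 0"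
  shows "\<exists>Y. smooth_vf Y \<and> theta_periodic T Y \<and> compact_supp_N Y
           \<and> (\<forall>p. div_vol \<rho> Y p = 0)
           \<and> (\<forall>p. lie_bracket gen_X Y p = 0)
           \<and> (\<exists>p. vf_apply Y h p \<noteq> 0)"
proof -
  define Gf where "Gf = (\<lambda>p::real \<times> (real^'k). \<Prod>c\<in>Basis - {u,w}. bc (x0 \<bullet> c) (p \<bullet> (0,c)))"
  define A where "A = (\<lambda>p::real \<times> (real^'k). bc (x0 \<bullet> u) (p \<bullet> (0,u)))"
  define A' where "A' = (\<lambda>p::real \<times> (real^'k). d1 (bc (x0 \<bullet> u)) (p \<bullet> (0,u)))"
  define C where "C = (\<lambda>p::real \<times> (real^'k). cc (x0 \<bullet> w) (p \<bullet> (0,w)))"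
  define C' where "C' = (\<lambda>p::real \<times> (real^'k). d1 (cc (x0 \<bullet> w)) (p \<bullet> (0,w)))"
  define P where "P = (\<lambda>p. Gf p * A p * C' p)"
  define Q where "Q = (\<lambda>p. Gf p * A' p * C p)"
  define Y where "Y = (\<lambda>p. inverse (\<rho> p) *\<^sub>R (P p *\<^sub>R (0::real,u) - Q p *\<^sub>R (0::real,w)))"
  have sGf: "Cn n Gf" for n
    unfolding Gf_def by (rule Cn_prod) (auto intro: Cn_compose[OF bc_smooth Cn_inner])
  have sA: "Cn n A" for n unfolding A_def by (rule Cn_compose[OF bc_smooth Cn_inner])
  have sA': "Cn n A'" for n unfolding A'_def by (rule Cn_compose[OF d1_smooth[OF bc_smooth] Cn_inner])
  have sC: "Cn n C" for n unfolding C_def by (rule Cn_compose[OF cc_smooth Cn_inner])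
  have sC': "Cn n C'" for n unfolding C'_def by (rule Cn_compose[OF d1_smooth[OF cc_smooth] Cn_inner])
  have sP: "Cn n P" for n unfolding P_def by (intro Cn_mult sGf sA sC')
  have sQ: "Cn n Q" for n unfolding Q_def by (intro Cn_mult sGf sA' sC)
  have sR: "Cn n \<rho>" for n using sr by (simp add: smooth_fun_def)
  have Yb: "Y p \<bullet> b = inverse (\<rho> p) * (P p * ((0,u) \<bullet> b) - Q p * ((0,w) \<bullet> b))" for p b
    by (simp only: Y_def inner_scaleR_left inner_diff_left)

  have smooth: "smooth_vf Y"
    unfolding smooth_vf_def smooth_fun_def Yb
    using nz by (auto intro!: Cn_mult Cn_inverse Cn_diff sR sP sQ Cn_const)

  have Yinv: "Y (\<theta> + t, x) = Y (\<theta>, x)" for \<theta> t x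
    by (simp add: Y_def P_def Q_def Gf_def A_def A'_def C_def C'_def inv)
  have periodic: "theta_periodic T Y" unfolding theta_periodic_def using Yinv by simp

  have lie: "lie_bracket gen_X Y p = 0" for p
  proof -
    have gx: "gen_X = (\<lambda>p. (1, 0))" by (rule ext) (simp add: gen_X_def)
    have d3: "\<rho> differentiable (at p)" "P differentiable (at p)" "Q differentiable (at p)"
      unfolding differentiable_def using Cn_SucD[OF sR, where x=p] Cn_SucD[OF sP, where x=p] Cn_SucD[OF sQ, where x=p] by blast+
    have dY: "Y differentiable (at p)"
      unfolding Y_def
      apply (rule differentiable_scaleR)
       apply (rule differentiable_inverse[OF d3(1) nz[rule_format]])
      apply (rule differentiable_diff)
       apply (rule differentiable_scaleR[OF d3(2) differentiable_const])
      apply (rule differentiable_scaleR[OF d3(3) differentiable_const])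
      done
    have "frechet_derivative Y (at p) (1, 0) = 0"
    proof (rule dir_zero[where f'="frechet_derivative Y (at p)" and v="(1,0)"])
      show "(Y has_derivative frechet_derivative Y (at p)) (at p)"
        using dY frechet_derivative_works by blast
      show "Y (p + t *\<^sub>R (1, 0)) = Y p" for t
        using Yinv[of "fst p" t "snd p"] by (cases p) simp
    qed
    then show ?thesis by (simp add: lie_bracket_def gx)
  qed

  have hGf: "(Gf has_derivative frechet_derivative Gf (at p)) (at p)" for p
    using Cn_SucD[OF sGf] .
  have Gfu: "frechet_derivative Gf (at p) (0,u) = 0" for p
  proof (rule dir_zero[OF hGf])
    show "Gf (p + t *\<^sub>R (0, u)) = Gf p" for t
      unfolding Gf_def
      by (rule prod.cong) (use uB in \<open>auto simp: inner_add_left inner_Basis\<close>)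
  qed
  have Gfw: "frechet_derivative Gf (at p) (0,w) = 0" for p
  proof (rule dir_zero[OF hGf])
    show "Gf (p + t *\<^sub>R (0, w)) = Gf p" for t
      unfolding Gf_def
      by (rule prod.cong) (use wB in \<open>auto simp: inner_add_left inner_Basis\<close>)
  qed
  have hA: "(A has_derivative (\<lambda>h. (h \<bullet> (0,u)) * A' p)) (at p)" for p
    unfolding A_def A'_def d1_def by (rule comp_inner_deriv[OF bc_smooth])
  have hA': "(A' has_derivative (\<lambda>h. (h \<bullet> (0,u)) * d1 (d1 (bc (x0 \<bullet> u))) (p \<bullet> (0,u)))) (at p)" for p
    unfolding A'_def d1_def[of "d1 _"] by (rule comp_inner_deriv[OF d1_smooth[OF bc_smooth]])
  have hC: "(C has_derivative (\<lambda>h. (h \<bullet> (0,w)) * C' p)) (at p)" for p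
    unfolding C_def C'_def d1_def by (rule comp_inner_deriv[OF cc_smooth])
  have hC': "(C' has_derivative (\<lambda>h. (h \<bullet> (0,w)) * d1 (d1 (cc (x0 \<bullet> w))) (p \<bullet> (0,w)))) (at p)" for p
    unfolding C'_def d1_def[of "d1 _"] by (rule comp_inner_deriv[OF d1_smooth[OF cc_smooth]])
  have uu: "(0::real, u) \<bullet> (0, u) = 1" "(0::real, w) \<bullet> (0, w) = 1" "(0::real, u) \<bullet> (0, w) = 0" "(0::real, w) \<bullet> (0, u) = 0"
    using uB wB uw by (auto simp: inner_Basis)
  have hP: "\<exists>DP. (P has_derivative DP) (at p) \<and> DP (0,u) = Gf p * A' p * C' p" for p
    unfolding P_def
    using has_derivative_mult[OF has_derivative_mult[OF hGf hA] hC', of p] Gfu[of p] uu by auto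
  have hQ: "\<exists>DQ. (Q has_derivative DQ) (at p) \<and> DQ (0,w) = Gf p * A' p * C' p" for p
    unfolding Q_def
    using has_derivative_mult[OF has_derivative_mult[OF hGf hA'] hC, of p] Gfw[of p] uu by auto
  have div: "div_vol \<rho> Y p = 0" for p
  proof -
    obtain DP where DP: "(P has_derivative DP) (at p)" "DP (0,u) = Gf p * A' p * C' p" using hP by blast
    obtain DQ where DQ: "(Q has_derivative DQ) (at p)" "DQ (0,w) = Gf p * A' p * C' p" using hQ by blast
    have eq: "(\<lambda>q. \<rho> q * (Y q \<bullet> b)) = (\<lambda>q. P q * ((0,u) \<bullet> b) - Q q * ((0,w) \<bullet> b))" for b
      by (rule ext) (simp add: Yb nz)
    have fd: "frechet_derivative (\<lambda>q. \<rho> q * (Y q \<bullet> b)) (at p) = (\<lambda>h. DP h * ((0,u) \<bullet> b) - DQ h * ((0,w) \<bullet> b))" for b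
      unfolding eq
      by (rule frechet_derivative_at[symmetric]) (intro has_derivative_diff has_derivative_mult_left DP(1) DQ(1))
    have "(\<Sum>b\<in>Basis. frechet_derivative (\<lambda>q. \<rho> q * (Y q \<bullet> b)) (at p) b)
        = (\<Sum>b\<in>Basis. DP b * ((0,u) \<bullet> b)) - (\<Sum>b\<in>Basis. DQ b * ((0,w) \<bullet> b))"
      by (simp add: fd sum_subtractf)
    also have "\<dots> = DP (0,u) - DQ (0,w)"
      using lin_basis_sum[OF has_derivative_linear[OF DP(1)]] lin_basis_sum[OF has_derivative_linear[OF DQ(1)]] by simp
    also have "\<dots> = 0" using DP DQ by simp
    finally show ?thesis by (simp add: div_vol_def)
  qed

  define B where "B = {x::real^'k. \<forall>c\<in>Basis. \<bar>x \<bullet> c - x0 \<bullet> c\<bar> \<le> 1}"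
  have bB: "bounded B"
  proof -
    have "norm x \<le> norm x0 + real DIM(real^'k)" if "x \<in> B" for x
    proof -
      have "norm (x - x0) \<le> (\<Sum>b\<in>Basis. \<bar>(x - x0) \<bullet> b\<bar>)" by (rule norm_le_l1)
      also have "\<dots> \<le> (\<Sum>b\<in>(Basis::(real^'k) set). 1)"
        by (rule sum_mono) (use that in \<open>auto simp: B_def inner_diff_left\<close>)
      finally have "norm (x - x0) \<le> real DIM(real^'k)" by simp
      then show ?thesis using norm_triangle_ineq2[of x x0] by linarith
    qed
    then show ?thesis unfolding bounded_iff by blast
  qed
  have supp: "compact_supp_N Y"
    unfolding compact_supp_N_def
  proof (intro exI[of _ B] conjI allI impI bB)
    fix \<theta> x assume "x \<notin> B"
    then obtain c where cB: "c \<in> Basis" and c1: "\<bar>x \<bullet> c - x0 \<bullet> c\<bar> > 1" by (auto simp: B_def not_le)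
    have PQ: "P (\<theta>, x) = 0 \<and> Q (\<theta>, x) = 0"
    proof (cases "c = u \<or> c = w")
      case True
      then show ?thesis
      proof
        assume "c = u"
        then have "A (\<theta>, x) = 0" "A' (\<theta>, x) = 0"
          using c1 by (auto simp: A_def A'_def inner_Pair_0 intro!: bc_out d1_out[OF bc_smooth bc_out])
        then show ?thesis by (simp add: P_def Q_def)
      next
        assume "c = w"
        then have "C (\<theta>, x) = 0" "C' (\<theta>, x) = 0"
          using c1 by (auto simp: C_def C'_def inner_Pair_0 intro!: cc_out d1_out[OF cc_smooth cc_out])
        then show ?thesis by (simp add: P_def Q_def)
      qed
    next
      case False
      then have "Gf (\<theta>, x) = 0"
        unfolding Gf_def using cB c1
        by (intro prod_zero) (auto simp: inner_Pair_0 intro!: bexI[of _ c] bc_out)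
      then show ?thesis by (simp add: P_def Q_def)
    qed
    then show "Y (\<theta>, x) = 0" by (simp add: Y_def zero_prod_def)
  qed

  define p0 where "p0 = (\<theta>0, x0)"
  have b0: "bump 0 \<noteq> 0" by (simp add: bump0)
  have Gf0: "Gf p0 \<noteq> 0" unfolding Gf_def p0_def by (simp add: inner_Pair_0 bc_def b0)
  have A0: "A p0 = bump 0" "A' p0 = 0" "C' p0 = bump 0"
    by (simp_all add: p0_def A_def A'_def C'_def inner_Pair_0 bc_def bc_d1_center cc_d1_center)
  have Y0: "Y p0 = (inverse (\<rho> p0) * P p0) *\<^sub>R (0,u)"
    by (simp add: Y_def Q_def A0)
  have hd0: "(h has_derivative frechet_derivative h (at p0)) (at p0)"
    using sh unfolding smooth_fun_def by (metis Cn_SucD)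
  have "vf_apply Y h p0 = (inverse (\<rho> p0) * P p0) * frechet_derivative h (at p0) (0,u)"
    by (simp only: vf_apply_def Y0 linear_scale[OF has_derivative_linear[OF hd0]] real_scaleR_def)
  moreover have "P p0 \<noteq> 0" using Gf0 A0 b0 by (simp add: P_def)
  ultimately have "vf_apply Y h p0 \<noteq> 0" using nz hu by (simp add: p0_def)
  then show ?thesis using smooth periodic supp div lie by blast
qed



theorem lemma3p4:
  fixes m :: nat
    and \<rho> :: "real \<times> (real^'k) \<Rightarrow> real"
    and h :: "real \<times> (real^'k) \<Rightarrow> real"
  assumes "m \<ge> 1"
    and "CARD('k) \<ge> 2"
    and "smooth_fun \<rho>" and "\<forall>p. \<rho> p \<noteq> 0"
    and "\<forall>t \<theta> x. \<rho> (\<theta> + t, x) = \<rho> (\<theta>, x)"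
    and "smooth_fun h" and "theta_periodic (2 * pi / real m) h"
    and "\<forall>p. vf_apply gen_X h p = 0"
    and "\<exists>p q. h p \<noteq> h q"
  shows "\<exists>Y. smooth_vf Y \<and> theta_periodic (2 * pi / real m) Y \<and> compact_supp_N Y
           \<and> (\<forall>p. div_vol \<rho> Y p = 0)
           \<and> (\<forall>p. lie_bracket gen_X Y p = 0)
           \<and> (\<exists>p. vf_apply Y h p \<noteq> 0)"
proof -
  obtain p b where bB: "b \<in> Basis" and hb: "frechet_derivative h (at p) b \<noteq> 0"
    using exists_partial[OF assms(6) assms(9)] by blast
  obtain \<theta>0 x0 where p: "p = (\<theta>0, x0)" by (cases p)
  have "vf_apply gen_X h p = 0" using assms(8) by blast
  then have "frechet_derivative h (at p) (1, 0) = 0"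
    by (simp only: vf_apply_def gen_X_def)
  have "b \<in> (\<lambda>i. (i, 0)) ` (Basis::real set) \<union> (\<lambda>i. (0, i)) ` Basis" using bB by (simp only: Basis_prod_def)
  then have "b = (1, 0) \<or> (\<exists>u\<in>Basis. b = (0, u))" by (simp only: Basis_real_def) blast
  then obtain u where uB: "u \<in> Basis" and bu: "b = (0, u)"
    using hb \<open>frechet_derivative h (at p) (1, 0) = 0\<close> by blast
  have c2: "card (Basis::(real^'k) set) \<ge> 2" using assms(2) by simp
  have "card ((Basis::(real^'k) set) - {u}) \<ge> 1" using c2 uB by (simp add: card_Diff_singleton)
  then have "(Basis::(real^'k) set) - {u} \<noteq> {}" by fastforce
  then obtain w where wB: "w \<in> (Basis::(real^'k) set)" and uw: "u \<noteq> w" by blast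
  have hu: "frechet_derivative h (at (\<theta>0, x0)) (0, u) \<noteq> 0" using hb unfolding p bu .
  show ?thesis
    by (rule Y_construct[OF assms(3,4,5,6) uB wB uw hu])
qed

end
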